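(* Let $f,g:\mathbb{R}^2\to\mathbb{R}$ be Lipschitz continuous. Let $(J_1,W_1)$ and $(J_2,W_2)$ be graphons, with $J_i=(\Omega_i,\mathcal A_i,\mu_i)$. Suppose that $\varphi:J_1\to J_2$ is measure preserving and that $W_1(x,y)=W_2(\varphi(x),\varphi(y))$ for almost every $(x,y)\in\Omega_1\times\Omega_1$. Then \[ \varphi^*:L^1(J_2)\to L^1(J_1),\qquad (\varphi^*v)_x=v_{\varphi(x)}, \] is an isometry which maps solutions of the graphon dynamical system $\mathcal D(J_2,W_2)$ to solutions of the graphon dynamical system $\mathcal D(J_1,W_1)$.
   Context: A graphon $(J,W)$ consists of a probability space $J=(\Omega,\mathcal A,\mu)$ and a symmetric measurable $W:\Omega\times\Omega\to[0,1]$. The graphon dynamical system $\mathcal D(J,W)$ is the flow on $L^1(J)$ given by \[ \dot u_x=f\Big(u_x,\int_J W(x,y)\,g(u_x,u_y)\,d\mu(y)\Big), \] where for each $t$ the equation holds for almost every $x$. A measurable map $\varphi:J_1\to J_2$ is measure preserving if $\mu_1(\varphi^{-1}(A))=\mu_2(A)$ for all $A\in\mathcal A_2$ (it need not be invertible). *)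

theory Defs
  imports "HOL-Probability.Probability"
begin

definition graphon :: "'a measure \<Rightarrow> ('a \<Rightarrow> 'a \<Rightarrow> real) \<Rightarrow> bool" where
  "graphon M W \<longleftrightarrow> prob_space M \<and>
     (\<lambda>(x, y). W x y) \<in> borel_measurable (M \<Otimes>\<^sub>M M) \<and>
     (\<forall>x\<in>space M. \<forall>y\<in>space M. W x y = W y x \<and> 0 \<le> W x y \<and> W x y \<le> 1)"

definition measure_pres :: "'a measure \<Rightarrow> 'b measure \<Rightarrow> ('a \<Rightarrow> 'b) \<Rightarrow> bool" where
  "measure_pres M1 M2 \<phi> \<longleftrightarrow> \<phi> \<in> measurable M1 M2 \<and>
     (\<forall>A\<in>sets M2. emeasure M1 (\<phi> -` A \<inter> space M1) = emeasure M2 A)"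

definition L1_norm :: "'a measure \<Rightarrow> ('a \<Rightarrow> real) \<Rightarrow> real" where
  "L1_norm M v = (\<integral>x. \<bar>v x\<bar> \<partial>M)"

definition gds_rhs :: "'a measure \<Rightarrow> ('a \<Rightarrow> 'a \<Rightarrow> real) \<Rightarrow> (real \<times> real \<Rightarrow> real)
    \<Rightarrow> (real \<times> real \<Rightarrow> real) \<Rightarrow> ('a \<Rightarrow> real) \<Rightarrow> 'a \<Rightarrow> real" where
  "gds_rhs M W f g v = (\<lambda>x. f (v x, \<integral>y. W x y * g (v x, v y) \<partial>M))"

definition L1_has_deriv :: "'a measure \<Rightarrow> (real \<Rightarrow> 'a \<Rightarrow> real) \<Rightarrow> ('a \<Rightarrow> real)
    \<Rightarrow> real \<Rightarrow> real set \<Rightarrow> bool" where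
  "L1_has_deriv M u u' t I \<longleftrightarrow>
     ((\<lambda>s. L1_norm M (\<lambda>x. u s x - u t x - (s - t) * u' x) / \<bar>s - t\<bar>) \<longlongrightarrow> 0) (at t within I)"

text \<open>u is a solution on the time set I of the graphon dynamical system D(M,W):
  a curve in L^1(M) which is differentiable (in L^1) with derivative equal to the
  right-hand side (as an element of L^1, i.e. the equation holds a.e. in x).\<close>
definition gds_solution :: "'a measure \<Rightarrow> ('a \<Rightarrow> 'a \<Rightarrow> real) \<Rightarrow> (real \<times> real \<Rightarrow> real)
    \<Rightarrow> (real \<times> real \<Rightarrow> real) \<Rightarrow> real set \<Rightarrow> (real \<Rightarrow> 'a \<Rightarrow> real) \<Rightarrow> bool" where
  "gds_solution M W f g I u \<longleftrightarrow>
     (\<forall>t\<in>I. integrable M (u t) \<and> integrable M (gds_rhs M W f g (u t)) \<and>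
        L1_has_deriv M u (gds_rhs M W f g (u t)) t I)"

end

theory Submission
  imports Defs
begin

theorem theorem3p12:
  fixes f g :: "real \<times> real \<Rightarrow> real"
    and M1 :: "'a measure" and W1 :: "'a \<Rightarrow> 'a \<Rightarrow> real"
    and M2 :: "'b measure" and W2 :: "'b \<Rightarrow> 'b \<Rightarrow> real"
    and \<phi> :: "'a \<Rightarrow> 'b"
  assumes "\<exists>C. C-lipschitz_on UNIV f"
    and "\<exists>C. C-lipschitz_on UNIV g"
    and "graphon M1 W1" and "graphon M2 W2"
    and "measure_pres M1 M2 \<phi>"
    and "AE p in M1 \<Otimes>\<^sub>M M1. W1 (fst p) (snd p) = W2 (\<phi> (fst p)) (\<phi> (snd p))"
  shows "(\<forall>v. integrable M2 v \<longrightarrow>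
            integrable M1 (\<lambda>x. v (\<phi> x)) \<and> L1_norm M1 (\<lambda>x. v (\<phi> x)) = L1_norm M2 v)
       \<and> (\<forall>I u. gds_solution M2 W2 f g I u \<longrightarrow>
            gds_solution M1 W1 f g I (\<lambda>t x. u t (\<phi> x)))"
proof -
  have fm[measurable]: "f \<in> borel_measurable borel"
    using assms(1) by (metis borel_measurable_continuous_onI lipschitz_on_continuous_on)
  have gm[measurable]: "g \<in> borel_measurable borel"
    using assms(2) by (metis borel_measurable_continuous_onI lipschitz_on_continuous_on)
  have P1: "prob_space M1" and W1m[measurable]: "(\<lambda>(x, y). W1 x y) \<in> borel_measurable (M1 \<Otimes>\<^sub>M M1)"
    using assms(3) unfolding graphon_def by auto
  have P2: "prob_space M2" and W2m[measurable]: "(\<lambda>(x, y). W2 x y) \<in> borel_measurable (M2 \<Otimes>\<^sub>M M2)"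
    using assms(4) unfolding graphon_def by auto
  interpret S1: prob_space M1 by (rule P1)
  interpret S2: prob_space M2 by (rule P2)
  interpret PS: pair_sigma_finite M1 M1 unfolding pair_sigma_finite_def
    using S1.sigma_finite_measure_axioms by simp
  have phim[measurable]: "\<phi> \<in> measurable M1 M2" using assms(5) unfolding measure_pres_def by auto
  have D: "distr M1 M2 \<phi> = M2"
    by (rule measure_eqI) (use assms(5) in \<open>auto simp: measure_pres_def emeasure_distr\<close>)
  have intg: "integrable M1 (\<lambda>x. h (\<phi> x)) \<longleftrightarrow> integrable M2 h" if "h \<in> borel_measurable M2" for h :: "'b \<Rightarrow> real"
    using integrable_distr_eq[OF phim that] D by simp
  have intl: "integral\<^sup>L M1 (\<lambda>x. h (\<phi> x)) = integral\<^sup>L M2 h" if "h \<in> borel_measurable M2" for h :: "'b \<Rightarrow> real"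
    using integral_distr[OF phim that] D by simp
  have L1: "L1_norm M1 (\<lambda>x. h (\<phi> x)) = L1_norm M2 h" if "h \<in> borel_measurable M2" for h :: "'b \<Rightarrow> real"
    unfolding L1_norm_def by (rule intl) (use that in measurable)
  have AEW: "AE x in M1. AE y in M1. W1 x y = W2 (\<phi> x) (\<phi> y)"
    using PS.AE_pair[OF assms(6)] by simp
  have rhs_m: "gds_rhs M1 W1 f g (\<lambda>x. v (\<phi> x)) \<in> borel_measurable M1"
    if vm[measurable]: "v \<in> borel_measurable M2" for v
    unfolding gds_rhs_def by measurable
  have rhs_ae: "AE x in M1. gds_rhs M1 W1 f g (\<lambda>x. v (\<phi> x)) x = gds_rhs M2 W2 f g v (\<phi> x)"
    if vm[measurable]: "v \<in> borel_measurable M2" for v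
    using AE_space AEW
  proof eventually_elim
    case (elim x)
    have xs: "\<phi> x \<in> space M2" using measurable_space[OF phim elim(1)] .
    have "(\<integral>y. W1 x y * g (v (\<phi> x), v (\<phi> y)) \<partial>M1) =
          (\<integral>y. W2 (\<phi> x) (\<phi> y) * g (v (\<phi> x), v (\<phi> y)) \<partial>M1)"
      apply (rule integral_cong_AE)
      using elim(1) xs apply measurable
      using elim(2) by eventually_elim simp
    also have "\<dots> = (\<integral>z. W2 (\<phi> x) z * g (v (\<phi> x), v z) \<partial>M2)"
      by (rule intl) (use xs in measurable)
    finally show ?case unfolding gds_rhs_def by simp
  qed
  have part1: "integrable M1 (\<lambda>x. v (\<phi> x)) \<and> L1_norm M1 (\<lambda>x. v (\<phi> x)) = L1_norm M2 v"
    if "integrable M2 v" for v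
    using that intg L1 by auto
  have part2: "gds_solution M1 W1 f g I (\<lambda>t x. u t (\<phi> x))"
    if sol: "gds_solution M2 W2 f g I u" for I u
    unfolding gds_solution_def
  proof (intro ballI conjI)
    fix t assume tI: "t \<in> I"
    have ut: "integrable M2 (u t)" and rt: "integrable M2 (gds_rhs M2 W2 f g (u t))"
      and dt: "L1_has_deriv M2 u (gds_rhs M2 W2 f g (u t)) t I"
      using sol tI unfolding gds_solution_def by auto
    have utm[measurable]: "u t \<in> borel_measurable M2" using ut by auto
    have rtm[measurable]: "gds_rhs M2 W2 f g (u t) \<in> borel_measurable M2" using rt by auto
    show "integrable M1 (\<lambda>x. u t (\<phi> x))" using part1 ut by auto
    have r1m[measurable]: "gds_rhs M1 W1 f g (\<lambda>x. u t (\<phi> x)) \<in> borel_measurable M1"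
      by (rule rhs_m) simp
    have ae: "AE x in M1. gds_rhs M1 W1 f g (\<lambda>x. u t (\<phi> x)) x = gds_rhs M2 W2 f g (u t) (\<phi> x)"
      by (rule rhs_ae) simp
    have "integrable M1 (\<lambda>x. gds_rhs M2 W2 f g (u t) (\<phi> x))" using intg rt by auto
    then show "integrable M1 (gds_rhs M1 W1 f g (\<lambda>x. u t (\<phi> x)))"
      by (rule integrable_cong_AE_imp) (use ae in \<open>auto elim: AE_mp\<close>)
    have eq: "L1_norm M1 (\<lambda>x. u s (\<phi> x) - u t (\<phi> x) - (s - t) * gds_rhs M1 W1 f g (\<lambda>x. u t (\<phi> x)) x)
        = L1_norm M2 (\<lambda>z. u s z - u t z - (s - t) * gds_rhs M2 W2 f g (u t) z)" if sI: "s \<in> I" for s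
    proof -
      have usm[measurable]: "u s \<in> borel_measurable M2" using sol sI unfolding gds_solution_def by auto
      have "L1_norm M1 (\<lambda>x. u s (\<phi> x) - u t (\<phi> x) - (s - t) * gds_rhs M1 W1 f g (\<lambda>x. u t (\<phi> x)) x)
        = L1_norm M1 (\<lambda>x. (\<lambda>z. u s z - u t z - (s - t) * gds_rhs M2 W2 f g (u t) z) (\<phi> x))"
        unfolding L1_norm_def
        apply (rule integral_cong_AE)
          apply measurable
        using ae by eventually_elim simp
      also have "\<dots> = L1_norm M2 (\<lambda>z. u s z - u t z - (s - t) * gds_rhs M2 W2 f g (u t) z)"
        by (rule L1) measurable
      finally show ?thesis .
    qed
    show "L1_has_deriv M1 (\<lambda>t x. u t (\<phi> x)) (gds_rhs M1 W1 f g (\<lambda>x. u t (\<phi> x))) t I"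
      using dt unfolding L1_has_deriv_def
      apply (rule tendsto_cong[THEN iffD1, rotated])
      unfolding eventually_at_filter using eq by (auto intro!: eventuallyI)
  qed
  show ?thesis using part1 part2 by blast
qed

end
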